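(* Let $n\ge3$. An oriented cycle $\overrightarrow{C_n}$ is $\{1\}$-antimagic if and only if it is unidirectional or $\Theta$-oriented.
   Context: An oriented graph is a simple graph each of whose edges is given one direction (an arc $(u,v)$ goes from $u$ to $v$). For vertices $u,v$, $d(u,v)$ is the length of a shortest directed path from $u$ to $v$ ($d(u,u)=0$, $\infty$ if no path). For a set $D$ of nonnegative integers, $N_D(v)=\{y : d(v,y)\in D\}$; for a bijection $f:V\to\{1,\dots,|V|\}$, $\omega_D(v)=\sum_{x\in N_D(v)}f(x)$ (empty sum $0$); $f$ is $D$-antimagic if distinct vertices have distinct $D$-weights, and the graph is $D$-antimagic if such an $f$ exists. A source is a vertex of in-degree $0$, a sink a vertex of out-degree $0$. An oriented cycle $\overrightarrow{C_n}$ is an orientation of the cycle on $v_1,\dots,v_n$. It is unidirectional if (up to relabeling) its arcs are $(v_i,v_{i+1})$, $1\le i\le n-1$, and $(v_n,v_1)$. It is $\Theta$-oriented if it has exactly one source and exactly one sink and these two vertices are adjacent; up to relabeling its arcs are $(v_i,v_{i+1})$, $1\le i\le n-1$, and $(v_1,v_n)$. *)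

theory Defs
  imports Main "HOL-Library.Extended_Nat"
begin

definition dist :: "('a \<times> 'a) set \<Rightarrow> 'a \<Rightarrow> 'a \<Rightarrow> enat" where
  "dist A u v = (if \<exists>k. (u, v) \<in> A ^^ k then enat (LEAST k. (u, v) \<in> A ^^ k) else \<infinity>)"

definition nbhdD :: "'a set \<Rightarrow> ('a \<times> 'a) set \<Rightarrow> nat set \<Rightarrow> 'a \<Rightarrow> 'a set" where
  "nbhdD V A D v = {y \<in> V. \<exists>k\<in>D. dist A v y = enat k}"

definition weightD :: "'a set \<Rightarrow> ('a \<times> 'a) set \<Rightarrow> nat set \<Rightarrow> ('a \<Rightarrow> nat) \<Rightarrow> 'a \<Rightarrow> nat" where
  "weightD V A D f v = (\<Sum>x\<in>nbhdD V A D v. f x)"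

definition D_antimagic_labeling :: "'a set \<Rightarrow> ('a \<times> 'a) set \<Rightarrow> nat set \<Rightarrow> ('a \<Rightarrow> nat) \<Rightarrow> bool" where
  "D_antimagic_labeling V A D f \<longleftrightarrow>
     bij_betw f V {1..card V} \<and> inj_on (weightD V A D f) V"

definition D_antimagic :: "'a set \<Rightarrow> ('a \<times> 'a) set \<Rightarrow> nat set \<Rightarrow> bool" where
  "D_antimagic V A D \<longleftrightarrow> (\<exists>f. D_antimagic_labeling V A D f)"

definition is_source :: "'a set \<Rightarrow> ('a \<times> 'a) set \<Rightarrow> 'a \<Rightarrow> bool" where
  "is_source V A v \<longleftrightarrow> v \<in> V \<and> (\<forall>u\<in>V. (u, v) \<notin> A)"

definition is_sink :: "'a set \<Rightarrow> ('a \<times> 'a) set \<Rightarrow> 'a \<Rightarrow> bool" where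
  "is_sink V A v \<longleftrightarrow> v \<in> V \<and> (\<forall>u\<in>V. (v, u) \<notin> A)"

definition oriented_cycle :: "nat \<Rightarrow> (nat \<times> nat) set \<Rightarrow> bool" where
  "oriented_cycle n A \<longleftrightarrow>
     (\<forall>i<n. ((i, Suc i mod n) \<in> A) \<noteq> ((Suc i mod n, i) \<in> A)) \<and>
     A \<subseteq> {(i, Suc i mod n) | i. i < n} \<union> {(Suc i mod n, i) | i. i < n}"

definition unidirectional :: "nat \<Rightarrow> (nat \<times> nat) set \<Rightarrow> bool" where
  "unidirectional n A \<longleftrightarrow>
     (\<exists>\<sigma>. bij_betw \<sigma> {0..<n} {0..<n} \<and> A = {(\<sigma> i, \<sigma> (Suc i mod n)) | i. i < n})"

definition theta_oriented :: "nat \<Rightarrow> (nat \<times> nat) set \<Rightarrow> bool" where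
  "theta_oriented n A \<longleftrightarrow>
     (\<exists>s t. {v. is_source {0..<n} A v} = {s} \<and> {v. is_sink {0..<n} A v} = {t} \<and>
            ((s, t) \<in> A \<or> (t, s) \<in> A))"

end

theory Submission
  imports Defs
begin

lemma switch_lemma:
  assumes "P a" "\<not> P m" "a \<le> m"
  shows "\<exists>k. a \<le> k \<and> k < m \<and> P k \<and> \<not> P (Suc k)"
  using assms
proof (induction m)
  case 0 thus ?case by auto
next
  case (Suc m)
  show ?case
  proof (cases "a = Suc m")
    case True with Suc show ?thesis by auto
  next
    case False
    hence am: "a \<le> m" using Suc by auto
    show ?thesis
    proof (cases "P m")
      case True thus ?thesis using am Suc by auto
    next
      case False
      from Suc.IH[OF Suc.prems(1) False am] show ?thesis by auto
    qed
  qed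
qed

lemma dist1_iff:
  assumes irr: "\<And>x. (x,x) \<notin> A"
  shows "dist A v y = enat 1 \<longleftrightarrow> (v,y) \<in> A"
proof
  assume h: "dist A v y = enat 1"
  show "(v,y)\<in>A"
  proof (cases "\<exists>k. (v,y) \<in> A ^^ k")
    case True
    with h have "(LEAST k. (v,y) \<in> A^^k) = 1" by (simp add: dist_def)
    moreover have "(v,y) \<in> A ^^ (LEAST k. (v,y) \<in> A^^k)" using True by (rule LeastI_ex)
    ultimately show ?thesis by simp
  next
    case False with h show ?thesis by (simp add: dist_def)
  qed
next
  assume h: "(v,y)\<in>A"
  have ex: "(v,y) \<in> A^^1" using h by simp
  have "(LEAST k. (v,y) \<in> A^^k) = 1"
  proof (rule Least_equality)
    show "(v,y) \<in> A^^1" by (rule ex)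
    fix k assume k: "(v,y)\<in>A^^k"
    show "1 \<le> k"
    proof (rule ccontr)
      assume "\<not> 1 \<le> k" hence "k = 0" by simp
      with k have "v = y" by simp
      with h irr show False by auto
    qed
  qed
  moreover have "\<exists>k. (v,y) \<in> A^^k" using ex by blast
  ultimately show "dist A v y = enat 1" by (simp add: dist_def)
qed

locale ocyc =
  fixes n :: nat and A :: "(nat \<times> nat) set"
  assumes n3: "n \<ge> 3" and oc: "oriented_cycle n A"
begin

definition nx :: "nat \<Rightarrow> nat" where "nx u = Suc u mod n"
definition pv :: "nat \<Rightarrow> nat" where "pv u = (u + n - 1) mod n"
definition out :: "nat \<Rightarrow> nat set" where "out v = {y. (v,y) \<in> A}"
definition c :: "nat \<Rightarrow> nat \<Rightarrow> nat" where "c b k = (b + k) mod n"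

lemma npos: "n > 0" using n3 by simp
lemma nx_lt: "nx u < n" using npos by (simp add: nx_def)
lemma pv_lt: "pv u < n" using npos by (simp add: pv_def)
lemma c_lt: "c b k < n" using npos by (simp add: c_def)

lemma nx_eq: "u < n \<Longrightarrow> nx u = (if Suc u = n then 0 else Suc u)"
  by (auto simp: nx_def)

lemma edge: "u < n \<Longrightarrow> ((u, nx u) \<in> A) \<noteq> ((nx u, u) \<in> A)"
  using oc unfolding oriented_cycle_def nx_def by blast

lemma A_sub: "(u,v) \<in> A \<Longrightarrow> u < n \<and> v < n \<and> (v = nx u \<or> u = nx v)"
  using oc npos unfolding oriented_cycle_def nx_def by auto

lemma pv_nx: "u<n \<Longrightarrow> pv (nx u) = u"
  by (cases "Suc u = n") (auto simp: pv_def nx_eq)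

lemma nx_pv: "u<n \<Longrightarrow> nx (pv u) = u"
proof (cases "u = 0")
  case True
  assume "u < n"
  have "pv u = n - 1" using True npos by (simp add: pv_def)
  thus ?thesis using True npos by (simp add: nx_def)
next
  case False
  assume "u < n"
  have "u + n - 1 = (u - 1) + n" using False by simp
  hence "pv u = (u - 1) mod n" by (simp add: pv_def)
  hence "pv u = u - 1" using \<open>u<n\<close> by simp
  thus ?thesis using False \<open>u<n\<close> by (simp add: nx_def)
qed

lemma nx_neq: "u<n \<Longrightarrow> nx u \<noteq> u"
  using n3 by (auto simp: nx_eq)

lemma pv_neq: "u<n \<Longrightarrow> pv u \<noteq> u"
  by (metis nx_neq nx_pv pv_lt)

lemma nx_pv_neq: "u<n \<Longrightarrow> nx u \<noteq> pv u"
proof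
  assume u: "u<n" and e: "nx u = pv u"
  hence "nx (nx u) = u" using nx_pv by simp
  thus False using u n3 by (cases "Suc u = n"; cases "Suc (Suc u) = n") (auto simp: nx_eq)
qed

lemma arc_antisym: assumes h: "(u,v)\<in>A" shows "(v,u)\<notin>A"
proof -
  from A_sub[OF h] have u: "u<n" "v<n" and d: "v = nx u \<or> u = nx v" by auto
  from d show ?thesis
  proof
    assume "v = nx u" thus ?thesis using edge[OF u(1)] h by auto
  next
    assume "u = nx v" thus ?thesis using edge[OF u(2)] h by auto
  qed
qed

lemma irrefl: "(u,u) \<notin> A"
proof
  assume h: "(u,u)\<in>A"
  from A_sub[OF h] have "u < n" "nx u = u" by auto
  thus False using nx_neq by blast
qed

lemma out_sub: "v<n \<Longrightarrow> out v \<subseteq> {nx v, pv v}"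
proof
  fix y assume "y \<in> out v"
  hence h: "(v,y)\<in>A" by (simp add: out_def)
  from A_sub[OF h] have y: "y<n" and d: "y = nx v \<or> v = nx y" by auto
  from d show "y \<in> {nx v, pv v}"
  proof
    assume "v = nx y" hence "pv v = y" using pv_nx[OF y] by simp
    thus ?thesis by simp
  qed simp
qed

lemma out_lt: "out v \<subseteq> {0..<n}"
  unfolding out_def using A_sub by auto

lemma in_sub: assumes h: "(u,v)\<in>A" shows "u \<in> {nx v, pv v}"
proof -
  from A_sub[OF h] have u: "u<n" and d: "v = nx u \<or> u = nx v" by auto
  from d show ?thesis
  proof
    assume "v = nx u" hence "pv v = u" using pv_nx[OF u] by simp
    thus ?thesis by simp
  qed simp
qed

lemma adj_nx: "v<n \<Longrightarrow> (v, nx v)\<in>A \<or> (nx v, v)\<in>A"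
  using edge by blast

lemma adj_pv: "v<n \<Longrightarrow> (v, pv v)\<in>A \<or> (pv v, v)\<in>A"
  using edge[of "pv v", OF pv_lt] nx_pv[of v] by auto

lemma source_iff: "is_source {0..<n} A v \<longleftrightarrow> v<n \<and> (\<forall>u. (u,v)\<notin>A)"
  using A_sub by (auto simp: is_source_def)

lemma sink_iff: "is_sink {0..<n} A v \<longleftrightarrow> v<n \<and> out v = {}"
  using A_sub by (auto simp: is_sink_def out_def)

lemma source_out: "v<n \<Longrightarrow> \<forall>u. (u,v)\<notin>A \<Longrightarrow> (v, nx v)\<in>A \<and> (v, pv v) \<in>A"
  using adj_nx adj_pv by blast

lemma weight_eq: "weightD {0..<n} A {1} f v = sum f (out v)"
proof -
  have "nbhdD {0..<n} A {1} v = out v"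
    unfolding nbhdD_def out_def using dist1_iff[OF irrefl] A_sub by auto
  thus ?thesis by (simp add: weightD_def)
qed

lemma finite_out: "finite (out v)"
  using out_lt finite_subset by blast

lemma interior_single:
  assumes "v<n" "out v \<noteq> {}" "(u,v)\<in>A" shows "\<exists>x. out v = {x}"
proof -
  have "u \<in> {nx v, pv v}" using in_sub[OF assms(3)] by simp
  moreover have "u \<notin> out v" using arc_antisym[OF assms(3)] by (simp add: out_def)
  ultimately have sub: "out v \<subseteq> {nx v, pv v} - {u}" using out_sub[OF assms(1)] by blast
  obtain x where x: "{nx v, pv v} - {u} \<subseteq> {x}"
    using \<open>u \<in> {nx v, pv v}\<close> by auto
  have "out v \<subseteq> {x}" using sub x by (rule subset_trans)
  hence "out v = {x}" using assms(2) by blast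
  thus ?thesis by blast
qed

lemma two_in_sink:
  assumes "(u,x)\<in>A" "(w,x)\<in>A" "u\<noteq>w" shows "out x = {}"
proof -
  have x: "x<n" using A_sub[OF assms(1)] by simp
  have "u \<in> {nx x, pv x}" "w \<in> {nx x, pv x}" using in_sub[OF assms(1)] in_sub[OF assms(2)] by auto
  hence uw: "{nx x, pv x} \<subseteq> {u,w}" using assms(3) by auto
  have nu: "(x,u) \<notin> A" "(x,w) \<notin> A" using arc_antisym[OF assms(1)] arc_antisym[OF assms(2)] by auto
  show ?thesis
  proof (rule ccontr)
    assume "out x \<noteq> {}"
    then obtain y where y: "y \<in> out x" by blast
    hence "y \<in> {u,w}" using out_sub[OF x] uw by blast
    hence "(x,u) \<in> A \<or> (x,w) \<in> A" using y by (auto simp: out_def)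
    thus False using nu by simp
  qed
qed

lemma c_Suc: "nx (c b k) = c b (Suc k)"
  unfolding nx_def c_def by (simp add: mod_Suc_eq)

lemma pv_c_Suc: "pv (c b (Suc k)) = c b k"
  using pv_nx[OF c_lt, of b k] c_Suc[of b k] by simp

lemma c_0: "b<n \<Longrightarrow> c b 0 = b" by (simp add: c_def)

lemma c_ne: assumes "b<n" "0<j" "j<n" shows "c b j \<noteq> b"
proof (cases "b + j < n")
  case True thus ?thesis using assms by (simp add: c_def)
next
  case False
  hence "c b j = (b + j - n) mod n" by (simp add: c_def le_mod_geq)
  also have "\<dots> = b + j - n" using assms by simp
  finally show ?thesis using assms False by simp
qed

lemma c_surj: assumes "b<n" "v<n" shows "\<exists>m<n. v = c b m"
proof (intro exI conjI)
  show "(v + n - b) mod n < n" using npos by simp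
  have "(b + (v + n - b) mod n) mod n = (b + (v + n - b)) mod n" by (simp add: mod_add_right_eq)
  also have "\<dots> = (v + n) mod n" using assms by simp
  also have "\<dots> = v" using assms by simp
  finally show "v = c b ((v + n - b) mod n)" by (simp add: c_def)
qed

lemma c_n1: "b<n \<Longrightarrow> c b (n-1) = pv b" using npos by (simp add: c_def pv_def)

lemma c_1: "b<n \<Longrightarrow> c b 1 = nx b" using c_Suc[of b 0] c_0 by simp

lemma sink_at:
  assumes "(c b k, c b (Suc k)) \<in> A" "(c b (Suc k), c b (Suc (Suc k))) \<notin> A"
  shows "out (c b (Suc k)) = {}"
proof -
  have "out (c b (Suc k)) \<subseteq> {c b (Suc (Suc k)), c b k}"
    using out_sub[OF c_lt, of b "Suc k"] c_Suc[of b "Suc k"] pv_c_Suc[of b k] by simp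
  moreover have "(c b (Suc k), c b k) \<notin> A" using arc_antisym[OF assms(1)] .
  ultimately show ?thesis using assms(2) unfolding out_def by blast
qed

end

context ocyc
begin

lemma sink_exists:
  assumes "i<n" "(i, nx i)\<in>A" "j<n" "(j, nx j) \<notin> A"
  shows "\<exists>t<n. out t = {}"
proof -
  obtain m where m: "m<n" "j = c i m" using c_surj assms by blast
  define P where "P k \<longleftrightarrow> (c i k, c i (Suc k)) \<in> A" for k
  have "P 0" using assms c_Suc[of i 0] c_0[OF assms(1)] by (simp add: P_def)
  moreover have "\<not> P m" using assms m c_Suc[of i m] by (simp add: P_def)
  ultimately obtain k where k: "k < m" "P k" "\<not> P (Suc k)"
    using switch_lemma[of P 0 m] by auto
  have "out (c i (Suc k)) = {}" using sink_at k by (simp add: P_def)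
  thus ?thesis using c_lt by blast
qed

lemma sink_has_in_pv:
  assumes "t<n" "out t = {}" shows "(pv t, t) \<in> A"
  using adj_pv[OF assms(1)] assms(2) by (auto simp: out_def)

lemma sink_has_in_nx:
  assumes "t<n" "out t = {}" shows "(nx t, t) \<in> A"
  using adj_nx[OF assms(1)] assms(2) by (auto simp: out_def)

lemma U1:
  assumes t: "t<n" "out t = {}" and uniq: "\<And>v. v<n \<Longrightarrow> out v = {} \<Longrightarrow> v = t"
    and ps: "\<forall>u. (u, pv t) \<notin> A" and v: "v<n" "\<forall>u. (u,v)\<notin>A"
  shows "v = pv t"
proof (rule ccontr)
  assume ne: "v \<noteq> pv t"
  obtain m where m: "m<n" "v = c t m" using c_surj t v by blast
  have "m \<noteq> 0"
  proof
    assume "m = 0" hence "v = t" using m c_0 t by simp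
    thus False using sink_has_in_pv[OF t] v(2) by auto
  qed
  moreover have "m \<noteq> n - 1" using m ne c_n1 t by auto
  ultimately have m1: "1 \<le> m" "m \<le> n - 2" using m by auto
  define P where "P k \<longleftrightarrow> (c t k, c t (Suc k)) \<in> A" for k
  have "P m" using source_out[OF v] m c_Suc[of t m] by (simp add: P_def)
  moreover have "\<not> P (n-2)"
  proof -
    have e: "n - 1 = Suc (n-2)" using n3 by simp
    have "pv t = c t (Suc (n-2))" using c_n1[OF t(1)] e by simp
    moreover have "(pv t, pv (pv t)) \<in> A" using source_out[OF pv_lt ps] by simp
    ultimately have "(c t (Suc (n-2)), c t (n-2)) \<in> A" using pv_c_Suc by simp
    thus ?thesis using arc_antisym by (auto simp: P_def)
  qed
  ultimately obtain k where k: "m \<le> k" "k < n-2" "P k" "\<not> P (Suc k)"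
    using switch_lemma[of P m "n-2"] m1 by auto
  have "out (c t (Suc k)) = {}" using sink_at k by (simp add: P_def)
  hence "c t (Suc k) = t" using uniq c_lt by blast
  moreover have "c t (Suc k) \<noteq> t" using c_ne[OF t(1), of "Suc k"] k by simp
  ultimately show False by simp
qed

lemma U2:
  assumes t: "t<n" "out t = {}" and uniq: "\<And>v. v<n \<Longrightarrow> out v = {} \<Longrightarrow> v = t"
    and qs: "\<forall>u. (u, nx t) \<notin> A" and v: "v<n" "\<forall>u. (u,v)\<notin>A"
  shows "v = nx t"
proof (rule ccontr)
  assume ne: "v \<noteq> nx t"
  obtain m where m: "m<n" "v = c t m" using c_surj t v by blast
  have "m \<noteq> 0"
  proof
    assume "m = 0" hence "v = t" using m c_0 t by simp
    thus False using sink_has_in_pv[OF t] v(2) by auto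
  qed
  moreover have "m \<noteq> 1" using m ne c_1 t by auto
  ultimately obtain m' where m': "m = Suc m'" "1 \<le> m'" by (cases m) auto
  define P where "P k \<longleftrightarrow> (c t k, c t (Suc k)) \<in> A" for k
  have "P 1"
  proof -
    have "(nx t, nx (nx t)) \<in> A" using source_out[OF nx_lt qs] by simp
    thus ?thesis using c_1[OF t(1)] c_Suc[of t 1] by (simp add: P_def)
  qed
  moreover have "\<not> P m'"
  proof -
    have "(v, pv v) \<in> A" using source_out[OF v] by simp
    hence "(c t (Suc m'), c t m') \<in> A" using m m' pv_c_Suc by simp
    thus ?thesis using arc_antisym by (auto simp: P_def)
  qed
  ultimately obtain k where k: "1 \<le> k" "k < m'" "P k" "\<not> P (Suc k)"
    using switch_lemma[of P 1 m'] m' by auto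
  have "out (c t (Suc k)) = {}" using sink_at k by (simp add: P_def)
  hence "c t (Suc k) = t" using uniq c_lt by blast
  moreover have "c t (Suc k) \<noteq> t" using c_ne[OF t(1), of "Suc k"] k m m' by simp
  ultimately show False by simp
qed

end

context ocyc
begin

lemma card_V: "card {0..<n} = n" by simp

lemma all_fw:
  assumes fw: "\<forall>i<n. (i, nx i) \<in> A" shows "unidirectional n A"
  unfolding unidirectional_def
proof (intro exI conjI)
  show "bij_betw id {0..<n} {0..<n}" by (rule bij_betw_id)
  show "A = {(id i, id (Suc i mod n)) | i. i < n}"
  proof
    show "A \<subseteq> {(id i, id (Suc i mod n)) | i. i < n}"
    proof
      fix p assume p: "p \<in> A"
      obtain u v where uv: "p = (u,v)" by (cases p)
      from A_sub[of u v] p uv have u: "u<n" "v<n" and d: "v = nx u \<or> u = nx v" by auto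
      have "v = nx u"
      proof (rule ccontr)
        assume "v \<noteq> nx u" hence "u = nx v" using d by simp
        hence "(nx v, v) \<in> A" using p uv by simp
        moreover have "(v, nx v) \<in> A" using fw u by simp
        ultimately show False using edge[OF u(2)] by simp
      qed
      thus "p \<in> {(id i, id (Suc i mod n)) | i. i < n}" using uv u by (auto simp: nx_def)
    qed
  next
    show "{(id i, id (Suc i mod n)) | i. i < n} \<subseteq> A" using fw by (auto simp: nx_def)
  qed
qed

lemma all_bw:
  assumes bw: "\<forall>i<n. (i, nx i) \<notin> A" shows "unidirectional n A"
  unfolding unidirectional_def
proof (intro exI conjI)
  show "bij_betw (\<lambda>i. n - 1 - i) {0..<n} {0..<n}"
    by (rule bij_betw_byWitness[where f'="\<lambda>i. n - 1 - i"]) auto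
  show "A = {((\<lambda>i. n - 1 - i) i, (\<lambda>i. n - 1 - i) (Suc i mod n)) | i. i < n}"
  proof
    show "A \<subseteq> {((\<lambda>i. n - 1 - i) i, (\<lambda>i. n - 1 - i) (Suc i mod n)) | i. i < n}"
    proof
      fix p assume p: "p \<in> A"
      obtain u v where uv: "p = (u,v)" by (cases p)
      from A_sub[of u v] p uv have u: "u<n" "v<n" and d: "v = nx u \<or> u = nx v" by auto
      have "u = nx v"
      proof (rule ccontr)
        assume "u \<noteq> nx v" hence "v = nx u" using d by simp
        thus False using bw u p uv by auto
      qed
      hence ue: "u = (if Suc v = n then 0 else Suc v)" using nx_eq u by simp
      define i where "i = n - 1 - u"
      have i: "i < n" using u by (simp add: i_def)
      have "u = n - 1 - i" using u by (simp add: i_def)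
      moreover have "v = n - 1 - (Suc i mod n)"
      proof (cases "Suc v = n")
        case True
        hence "u = 0" using ue by simp
        hence "i = n - 1" by (simp add: i_def)
        hence "Suc i mod n = 0" using npos by simp
        thus ?thesis using True by simp
      next
        case False
        hence "u = Suc v" using ue by simp
        hence "Suc i = n - 1 - v" using u False by (simp add: i_def)
        hence "Suc i mod n = n - 1 - v" using npos by simp
        thus ?thesis using u by simp
      qed
      ultimately show "p \<in> {((\<lambda>i. n - 1 - i) i, (\<lambda>i. n - 1 - i) (Suc i mod n)) | i. i < n}"
        using uv i by blast
    qed
  next
    show "{((\<lambda>i. n - 1 - i) i, (\<lambda>i. n - 1 - i) (Suc i mod n)) | i. i < n} \<subseteq> A"
    proof
      fix p assume "p \<in> {((\<lambda>i. n - 1 - i) i, (\<lambda>i. n - 1 - i) (Suc i mod n)) | i. i < n}"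
      then obtain i where i: "i<n" "p = (n - 1 - i, n - 1 - (Suc i mod n))" by auto
      define v where "v = n - 1 - (Suc i mod n)"
      have v: "v < n" using npos by (simp add: v_def)
      have "nx v = n - 1 - i"
      proof (cases "Suc i = n")
        case True
        hence "v = n - 1" by (simp add: v_def)
        thus ?thesis using True npos by (simp add: nx_eq)
      next
        case False
        hence "v = n - 2 - i" using i by (simp add: v_def)
        moreover have "Suc (n - 2 - i) \<noteq> n" using n3 by simp
        ultimately show ?thesis using False i v by (simp add: nx_eq)
      qed
      moreover have "(nx v, v) \<in> A" using bw v edge[OF v] by auto
      ultimately show "p \<in> A" using i v_def by simp
    qed
  qed
qed

lemma uni_anti:
  assumes "unidirectional n A" shows "D_antimagic {0..<n} A {1}"
proof -
  obtain \<sigma> where bij: "bij_betw \<sigma> {0..<n} {0..<n}" and Aeq: "A = {(\<sigma> i, \<sigma> (Suc i mod n)) | i. i < n}"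
    using assms unfolding unidirectional_def by blast
  have inj: "inj_on \<sigma> {0..<n}" using bij bij_betw_def by blast
  have outs: "out (\<sigma> i) = {\<sigma> (nx i)}" if i: "i<n" for i
  proof -
    have "(\<sigma> i, y) \<in> A \<longleftrightarrow> y = \<sigma> (nx i)" for y
    proof
      assume "(\<sigma> i, y) \<in> A"
      then obtain k where k: "k<n" "\<sigma> i = \<sigma> k" "y = \<sigma> (Suc k mod n)" using Aeq by auto
      have "i = k" using inj k i by (auto dest: inj_onD)
      thus "y = \<sigma> (nx i)" using k by (simp add: nx_def)
    next
      assume "y = \<sigma> (nx i)" thus "(\<sigma> i, y) \<in> A" using Aeq i by (auto simp: nx_def)
    qed
    thus ?thesis by (auto simp: out_def)
  qed
  have W: "weightD {0..<n} A {1} Suc (\<sigma> i) = Suc (\<sigma> (nx i))" if "i<n" for i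
    unfolding weight_eq using outs[OF that] by simp
  have "D_antimagic_labeling {0..<n} A {1} Suc"
    unfolding D_antimagic_labeling_def
  proof
    show "bij_betw Suc {0..<n} {1..card {0..<n}}"
      by (simp add: bij_betw_def atLeastLessThanSuc_atLeastAtMost)
    show "inj_on (weightD {0..<n} A {1} Suc) {0..<n}"
    proof (rule inj_onI)
      fix x y assume x: "x \<in> {0..<n}" and y: "y \<in> {0..<n}"
        and e: "weightD {0..<n} A {1} Suc x = weightD {0..<n} A {1} Suc y"
      have "x \<in> \<sigma> ` {0..<n}" using x bij unfolding bij_betw_def by simp
      then obtain i where i: "i<n" "x = \<sigma> i" by auto
      have "y \<in> \<sigma> ` {0..<n}" using y bij unfolding bij_betw_def by simp
      then obtain j where j: "j<n" "y = \<sigma> j" by auto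
      have "\<sigma> (nx i) = \<sigma> (nx j)" using e W i j by simp
      hence "nx i = nx j" using inj nx_lt by (auto dest: inj_onD)
      hence "i = j" using pv_nx i j by metis
      thus "x = y" using i j by simp
    qed
  qed
  thus ?thesis unfolding D_antimagic_def by blast
qed

end

context ocyc
begin

lemma theta_anti:
  assumes "theta_oriented n A" shows "D_antimagic {0..<n} A {1}"
proof -
  obtain s t where S: "{v. is_source {0..<n} A v} = {s}" and T: "{v. is_sink {0..<n} A v} = {t}"
    and adj: "(s,t)\<in>A \<or> (t,s)\<in>A"
    using assms unfolding theta_oriented_def by blast
  have srcS: "\<And>v. (v<n \<and> (\<forall>u. (u,v)\<notin>A)) \<longleftrightarrow> v = s" using S source_iff by blast
  have snkT: "\<And>v. (v<n \<and> out v = {}) \<longleftrightarrow> v = t" using T sink_iff by blast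
  have s: "s<n" "\<forall>u. (u,s)\<notin>A" using srcS by auto
  have t: "t<n" "out t = {}" using snkT by auto
  have st: "(s,t) \<in> A" using adj t(2) by (auto simp: out_def)
  define g where "g x = (if x = t then n - 1 else if x = n - 1 then t else x)" for x
  define f where "f = Suc \<circ> g"
  have gg: "\<forall>x\<in>{0..<n}. g (g x) = x" by (auto simp: g_def)
  have gim: "g ` {0..<n} \<subseteq> {0..<n}" using t by (auto simp: g_def)
  have bg: "bij_betw g {0..<n} {0..<n}" using bij_betw_byWitness[OF gg gg gim gim] .
  have bS: "bij_betw Suc {0..<n} {1..n}"
    by (simp add: bij_betw_def atLeastLessThanSuc_atLeastAtMost)
  have bf: "bij_betw f {0..<n} {1..n}" unfolding f_def using bij_betw_trans[OF bg bS] .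
  have finj: "inj_on f {0..<n}" using bf bij_betw_def by blast
  have frange: "1 \<le> f x \<and> f x \<le> n" if "x<n" for x
    using bf that unfolding bij_betw_def by auto
  have ft: "f t = n" using npos by (simp add: f_def g_def)
  define W where "W = weightD {0..<n} A {1} f"
  have Weq: "W v = sum f (out v)" for v unfolding W_def by (rule weight_eq)
  have Wt: "W t = 0" using t Weq by simp
  have Ws: "W s > n"
  proof -
    have so: "(s, nx s) \<in> A" "(s, pv s) \<in> A" using source_out[OF s] by auto
    have "out s = {nx s, pv s}" using out_sub[OF s(1)] so by (auto simp: out_def)
    hence "W s = f (nx s) + f (pv s)" using Weq nx_pv_neq[OF s(1)] by simp
    moreover have "t = nx s \<or> t = pv s" using st out_sub[OF s(1)] by (auto simp: out_def)
    moreover have "1 \<le> f (nx s)" "1 \<le> f (pv s)" using frange nx_lt pv_lt by auto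
    ultimately show ?thesis using ft by auto
  qed
  have Wi: "\<exists>x. x<n \<and> out v = {x} \<and> W v = f x \<and> (v,x) \<in> A"
    if v: "v<n" "v \<noteq> s" "v \<noteq> t" for v
  proof -
    obtain u where u: "(u,v)\<in>A" using srcS[of v] v by auto
    have "out v \<noteq> {}" using snkT[of v] v by auto
    then obtain x where x: "out v = {x}" using interior_single[OF v(1) _ u] by blast
    hence "(v,x)\<in>A" by (auto simp: out_def)
    moreover hence "x<n" using A_sub by blast
    ultimately show ?thesis using x Weq by auto
  qed
  have "inj_on W {0..<n}"
  proof (rule inj_onI)
    fix u w assume u: "u \<in> {0..<n}" and w: "w \<in> {0..<n}" and e: "W u = W w"
    show "u = w"
    proof (cases "u = s \<or> u = t \<or> w = s \<or> w = t")
      case True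
      have "v = s \<or> v = t \<or> (1 \<le> W v \<and> W v \<le> n)" if vl: "v<n" for v
      proof (cases "v = s \<or> v = t")
        case False
        then obtain x where "x<n" "W v = f x" using Wi[of v] vl by auto
        thus ?thesis using frange by auto
      qed auto
      hence "u = s \<or> u = t \<or> (1 \<le> W u \<and> W u \<le> n)" "w = s \<or> w = t \<or> (1 \<le> W w \<and> W w \<le> n)"
        using u w by auto
      thus ?thesis using True e Ws Wt by auto
    next
      case False
      obtain x where x: "x<n" "W u = f x" "(u,x)\<in>A" using Wi u False by auto
      obtain y where y: "y<n" "W w = f y" "(w,y)\<in>A" using Wi w False by auto
      have "x = y" using e x y finj by (auto dest: inj_onD)
      show "u = w"
      proof (rule ccontr)
        assume uw: "u \<noteq> w"
        have "out x = {}" using two_in_sink[OF x(3)] y(3) \<open>x = y\<close> uw by simp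
        hence "x = t" using snkT x by blast
        hence "u \<in> {nx t, pv t}" "w \<in> {nx t, pv t}" "s \<in> {nx t, pv t}"
          using in_sub x(3) y(3) \<open>x = y\<close> st by auto
        thus False using uw False by auto
      qed
    qed
  qed
  hence "D_antimagic_labeling {0..<n} A {1} f"
    unfolding D_antimagic_labeling_def W_def using bf by simp
  thus ?thesis unfolding D_antimagic_def by blast
qed

lemma anti_imp:
  assumes "D_antimagic {0..<n} A {1}" shows "unidirectional n A \<or> theta_oriented n A"
proof -
  obtain f where bf: "bij_betw f {0..<n} {1..n}" and inj: "inj_on (weightD {0..<n} A {1} f) {0..<n}"
    using assms unfolding D_antimagic_def D_antimagic_labeling_def by auto
  define W where "W = weightD {0..<n} A {1} f"
  have Weq: "W v = sum f (out v)" for v unfolding W_def by (rule weight_eq)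
  have injW: "inj_on W {0..<n}" using inj W_def by simp
  show ?thesis
  proof (cases "\<forall>i<n. (i, nx i) \<in> A")
    case True thus ?thesis using all_fw by blast
  next
    case F1: False
    show ?thesis
    proof (cases "\<forall>i<n. (i, nx i) \<notin> A")
      case True thus ?thesis using all_bw by blast
    next
      case False
      obtain i j where "i<n" "(i, nx i) \<in> A" "j<n" "(j, nx j) \<notin> A" using F1 False by blast
      then obtain t where t: "t<n" "out t = {}" using sink_exists by blast
      have uniq: "v = t" if "v<n" "out v = {}" for v
      proof -
        have "W v = W t" using that t Weq by simp
        thus ?thesis using injW that t by (auto dest: inj_onD)
      qed
      have pt: "(pv t, t) \<in> A" using sink_has_in_pv[OF t] .
      have qt: "(nx t, t) \<in> A" using sink_has_in_nx[OF t] .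
      have "(\<forall>u. (u, pv t) \<notin> A) \<or> (\<forall>u. (u, nx t) \<notin> A)"
      proof (rule ccontr)
        assume "\<not> ?thesis"
        then obtain u1 u2 where u1: "(u1, pv t) \<in> A" and u2: "(u2, nx t) \<in> A" by blast
        have "out (pv t) \<noteq> {}" using pt by (auto simp: out_def)
        then obtain x where x: "out (pv t) = {x}" using interior_single[OF pv_lt _ u1] by blast
        hence xt: "x = t" using pt by (auto simp: out_def)
        have "out (nx t) \<noteq> {}" using qt by (auto simp: out_def)
        then obtain y where y: "out (nx t) = {y}" using interior_single[OF nx_lt _ u2] by blast
        hence yt: "y = t" using qt by (auto simp: out_def)
        have "W (pv t) = W (nx t)" using Weq x y xt yt by simp
        hence "pv t = nx t" using injW pv_lt nx_lt by (auto dest: inj_onD)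
        thus False using nx_pv_neq[OF t(1)] by simp
      qed
      thus ?thesis
      proof
        assume ps: "\<forall>u. (u, pv t) \<notin> A"
        have "{v. is_source {0..<n} A v} = {pv t}"
          using U1[OF t uniq ps] ps pv_lt source_iff by blast
        moreover have "{v. is_sink {0..<n} A v} = {t}" using uniq t sink_iff by blast
        ultimately have "theta_oriented n A" unfolding theta_oriented_def using pt by blast
        thus ?thesis by blast
      next
        assume qs: "\<forall>u. (u, nx t) \<notin> A"
        have "{v. is_source {0..<n} A v} = {nx t}"
          using U2[OF t uniq qs] qs nx_lt source_iff by blast
        moreover have "{v. is_sink {0..<n} A v} = {t}" using uniq t sink_iff by blast
        ultimately have "theta_oriented n A" unfolding theta_oriented_def using qt by blast
        thus ?thesis by blast
      qed
    qed
  qed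
qed

end

theorem mainTheorem4:
  fixes n :: nat and A :: "(nat \<times> nat) set"
  assumes "n \<ge> 3" and "oriented_cycle n A"
  shows "D_antimagic {0..<n} A {1} \<longleftrightarrow> unidirectional n A \<or> theta_oriented n A"
proof -
  interpret ocyc n A using assms by (rule ocyc.intro)
  show ?thesis using anti_imp uni_anti theta_anti by blast
qed

end
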